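(* Let $G$ be a simple graph and $S\subset V(G)$ a set of pairwise non-adjacent vertices. If $G$ is $k$-shellable, then $G\setminus N_G[S]$ is $k$-shellable.
   Context: $N_G[S]=\bigcup_{x\in S}(N_G(x)\cup\{x\})$, where $N_G(x)$ is the set of neighbours of $x$; $G\setminus U$ deletes the vertices of $U$ and incident edges. A graph $H$ is $k$-shellable if its independence complex $\Delta_H$ (faces: sets of pairwise non-adjacent vertices) is. $\langle F_1,\ldots,F_s\rangle$ denotes the complex with facets $F_1,\dots,F_s$. A complex $\Gamma$ of dimension $d$ is $k$-shellable ($1\le k\le d+1$) if its facets can be ordered $F_1,\ldots,F_r$ such that for every $j=2,\ldots,r$, $\Gamma_j=\langle F_j\rangle\cap\langle F_1,\ldots,F_{j-1}\rangle$ satisfies (i) $\Gamma_j$ is generated by a nonempty set of faces of $\langle F_j\rangle$ of dimension $|F_j|-k-1$; (ii) if $\Gamma_j$ has more than one facet, then for every two distinct facets $\sigma,\tau$ of $\Gamma_j$, $F_j\subseteq\sigma\cup\tau$. *)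

theory Defs
  imports Main
begin

definition simple_graph :: "'a set \<Rightarrow> 'a set set \<Rightarrow> bool" where
  "simple_graph V E \<longleftrightarrow> finite V \<and> (\<forall>e\<in>E. e \<subseteq> V \<and> card e = 2)"

definition adjacent :: "'a set set \<Rightarrow> 'a \<Rightarrow> 'a \<Rightarrow> bool" where
  "adjacent E x y \<longleftrightarrow> {x, y} \<in> E"

definition independent_set :: "'a set set \<Rightarrow> 'a set \<Rightarrow> bool" where
  "independent_set E S \<longleftrightarrow> (\<forall>x\<in>S. \<forall>y\<in>S. \<not> adjacent E x y)"

definition closed_nbhd :: "'a set \<Rightarrow> 'a set set \<Rightarrow> 'a set \<Rightarrow> 'a set" where
  "closed_nbhd V E S = (\<Union>x\<in>S. {y\<in>V. adjacent E x y} \<union> {x})"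

definition del_verts :: "'a set \<Rightarrow> 'a set \<Rightarrow> 'a set" where
  "del_verts V U = V - U"

definition del_edges :: "'a set set \<Rightarrow> 'a set \<Rightarrow> 'a set set" where
  "del_edges E U = {e\<in>E. e \<inter> U = {}}"

definition ind_complex :: "'a set \<Rightarrow> 'a set set \<Rightarrow> 'a set set" where
  "ind_complex V E = {F. F \<subseteq> V \<and> independent_set E F}"

definition facets :: "'a set set \<Rightarrow> 'a set set" where
  "facets \<Gamma> = {F\<in>\<Gamma>. \<forall>G\<in>\<Gamma>. F \<subseteq> G \<longrightarrow> G = F}"

definition gen :: "'a set set \<Rightarrow> 'a set set" where
  "gen A = {\<sigma>. \<exists>F\<in>A. \<sigma> \<subseteq> F}"

text \<open>A shelling order witnessing k-shellability: a listing Fs of the facets, such that for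
  each j \<ge> 2 (index j in 0-based numbering, j \<ge> 1), Gamma_j = <F_j> \<inter> <F_1..F_{j-1}> is
  generated by a nonempty set of faces of <F_j> of dimension |F_j|-k-1 (i.e. cardinality
  |F_j|-k), and any two distinct facets of Gamma_j cover F_j.\<close>
definition k_shelling :: "nat \<Rightarrow> 'a set set \<Rightarrow> 'a set list \<Rightarrow> bool" where
  "k_shelling k \<Gamma> Fs \<longleftrightarrow>
     distinct Fs \<and> set Fs = facets \<Gamma> \<and>
     (\<forall>j. 0 < j \<and> j < length Fs \<longrightarrow>
        (let Fj = Fs ! j; \<Gamma>j = gen {Fj} \<inter> gen (set (take j Fs)) in
          (\<exists>A. A \<noteq> {} \<and> A \<subseteq> gen {Fj} \<and> (\<forall>\<sigma>\<in>A. card \<sigma> + k = card Fj) \<and> \<Gamma>j = gen A) \<and>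
          (\<forall>\<sigma>\<in>facets \<Gamma>j. \<forall>\<tau>\<in>facets \<Gamma>j. \<sigma> \<noteq> \<tau> \<longrightarrow> Fj \<subseteq> \<sigma> \<union> \<tau>)))"

definition k_shellable :: "nat \<Rightarrow> 'a set set \<Rightarrow> bool" where
  "k_shellable k \<Gamma> \<longleftrightarrow> 1 \<le> k \<and> (\<exists>Fs. k_shelling k \<Gamma> Fs)"

definition k_shellable_graph :: "nat \<Rightarrow> 'a set \<Rightarrow> 'a set set \<Rightarrow> bool" where
  "k_shellable_graph k V E \<longleftrightarrow> k_shellable k (ind_complex V E)"

end

theory Submission
  imports Defs
begin

definition lk :: "'a set set \<Rightarrow> 'a set \<Rightarrow> 'a set set" where
  "lk D S = {\<sigma>. \<sigma> \<inter> S = {} \<and> \<sigma> \<union> S \<in> D}"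

lemma filter_take_idx:
  "j < length (filter P xs) \<Longrightarrow> \<exists>j0<length xs. filter P xs ! j = xs ! j0 \<and> P (xs!j0)
     \<and> take j (filter P xs) = filter P (take j0 xs)"
proof (induction xs arbitrary: j)
  case Nil then show ?case by simp
next
  case (Cons x xs)
  show ?case
  proof (cases "P x")
    case True
    show ?thesis
    proof (cases j)
      case 0 then show ?thesis using True by (intro exI[of _ 0]) auto
    next
      case (Suc j')
      then have "j' < length (filter P xs)" using Cons.prems True by simp
      from Cons.IH[OF this] obtain j0 where "j0 < length xs" "filter P xs ! j' = xs ! j0"
        "P (xs!j0)" "take j' (filter P xs) = filter P (take j0 xs)" by blast
      then show ?thesis using True Suc by (intro exI[of _ "Suc j0"]) auto
    qed
  next
    case False
    then have "j < length (filter P xs)" using Cons.prems by simp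
    from Cons.IH[OF this] obtain j0 where "j0 < length xs" "filter P xs ! j = xs ! j0"
      "P (xs!j0)" "take j (filter P xs) = filter P (take j0 xs)" by blast
    then show ?thesis using False by (intro exI[of _ "Suc j0"]) auto
  qed
qed

lemma facet_exists:
  assumes "finite D" "x \<in> D" shows "\<exists>F\<in>facets D. x \<subseteq> F"
proof -
  have "finite {y\<in>D. x \<subseteq> y}" "{y\<in>D. x \<subseteq> y} \<noteq> {}" using assms by auto
  from finite_has_maximal[OF this] obtain m where m: "m \<in> {y\<in>D. x \<subseteq> y}"
    "\<forall>b\<in>{y\<in>D. x \<subseteq> y}. m \<subseteq> b \<longrightarrow> m = b" by blast
  then have "m \<in> facets D" unfolding facets_def by blast
  then show ?thesis using m by blast
qed

lemma lk_facet:
  assumes "\<sigma> \<in> facets (lk D S)" shows "\<sigma> \<union> S \<in> facets D \<and> \<sigma> \<inter> S = {}"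
proof -
  have s: "\<sigma> \<inter> S = {}" "\<sigma> \<union> S \<in> D" using assms unfolding facets_def lk_def by auto
  have "\<rho> = \<sigma> \<union> S" if "\<rho> \<in> D" "\<sigma> \<union> S \<subseteq> \<rho>" for \<rho>
  proof -
    have "(\<rho> - S) \<union> S = \<rho>" using that by blast
    then have "\<rho> - S \<in> lk D S" using that unfolding lk_def by auto
    moreover have "\<sigma> \<subseteq> \<rho> - S" using that s by blast
    ultimately have "\<sigma> = \<rho> - S" using assms unfolding facets_def by blast
    then show ?thesis using that by blast
  qed
  then show ?thesis using s unfolding facets_def by blast
qed

lemma facets_lk:
  assumes "finite D"
  shows "facets (lk D S) = (\<lambda>F. F - S) ` {F\<in>facets D. S \<subseteq> F}"
proof
  show "facets (lk D S) \<subseteq> (\<lambda>F. F - S) ` {F\<in>facets D. S \<subseteq> F}"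
  proof
    fix \<sigma> assume a: "\<sigma> \<in> facets (lk D S)"
    from lk_facet[OF a] have "\<sigma> \<union> S \<in> facets D" "\<sigma> \<inter> S = {}" by auto
    then show "\<sigma> \<in> (\<lambda>F. F - S) ` {F\<in>facets D. S \<subseteq> F}"
      by (intro image_eqI[of _ _ "\<sigma> \<union> S"]) auto
  qed
next
  show "(\<lambda>F. F - S) ` {F\<in>facets D. S \<subseteq> F} \<subseteq> facets (lk D S)"
  proof
    fix x assume "x \<in> (\<lambda>F. F - S) ` {F\<in>facets D. S \<subseteq> F}"
    then obtain F where F: "F \<in> facets D" "S \<subseteq> F" "x = F - S" by blast
    have "x \<in> lk D S" using F unfolding lk_def facets_def
      by (auto simp: Un_absorb2)
    moreover have "\<tau> = x" if "\<tau> \<in> lk D S" "x \<subseteq> \<tau>" for \<tau>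
    proof -
      have "\<tau> \<union> S \<in> D" "\<tau> \<inter> S = {}" using that unfolding lk_def by auto
      moreover have "F \<subseteq> \<tau> \<union> S" using F that by blast
      ultimately have "\<tau> \<union> S = F" using F unfolding facets_def by blast
      then show ?thesis using F \<open>\<tau> \<inter> S = {}\<close> by blast
    qed
    ultimately show "x \<in> facets (lk D S)" unfolding facets_def by blast
  qed
qed


lemma L1: "S \<subseteq> F \<Longrightarrow> \<sigma> \<subseteq> F - S \<Longrightarrow> \<sigma> \<union> S \<subseteq> F \<and> \<sigma> \<inter> S = {}" by blast
lemma L2: "\<sigma> \<inter> S = {} \<Longrightarrow> \<sigma> \<union> S \<subseteq> F \<Longrightarrow> S \<subseteq> F \<and> \<sigma> \<subseteq> F - S" by blast
lemma L3: assumes "S \<subseteq> Fj"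
  shows "(\<sigma> \<subseteq> Fj - S \<and> (\<exists>F\<in>X. S \<subseteq> F \<and> \<sigma> \<subseteq> F - S)) \<longleftrightarrow> (\<sigma> \<inter> S = {} \<and> \<sigma> \<union> S \<subseteq> Fj \<and> (\<exists>F\<in>X. \<sigma> \<union> S \<subseteq> F))"
proof
  assume a: "\<sigma> \<subseteq> Fj - S \<and> (\<exists>F\<in>X. S \<subseteq> F \<and> \<sigma> \<subseteq> F - S)"
  then obtain F where F: "F \<in> X" "S \<subseteq> F" "\<sigma> \<subseteq> F - S" by blast
  show "\<sigma> \<inter> S = {} \<and> \<sigma> \<union> S \<subseteq> Fj \<and> (\<exists>F\<in>X. \<sigma> \<union> S \<subseteq> F)"
    using L1[OF assms a[THEN conjunct1]] L1[OF F(2,3)] F(1) by blast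
next
  assume a: "\<sigma> \<inter> S = {} \<and> \<sigma> \<union> S \<subseteq> Fj \<and> (\<exists>F\<in>X. \<sigma> \<union> S \<subseteq> F)"
  then obtain F where F: "F \<in> X" "\<sigma> \<union> S \<subseteq> F" by blast
  show "\<sigma> \<subseteq> Fj - S \<and> (\<exists>F\<in>X. S \<subseteq> F \<and> \<sigma> \<subseteq> F - S)"
    using L2[of \<sigma> S Fj] L2[OF _ F(2)] a F(1) by blast
qed
lemma L4: "(\<sigma> \<inter> S = {} \<and> (\<exists>a\<in>A. \<sigma> \<union> S \<subseteq> a)) \<longleftrightarrow> (\<exists>a\<in>A. S \<subseteq> a \<and> \<sigma> \<subseteq> a - S)"
proof
  assume a: "\<sigma> \<inter> S = {} \<and> (\<exists>a\<in>A. \<sigma> \<union> S \<subseteq> a)"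
  then obtain F where F: "F \<in> A" "\<sigma> \<union> S \<subseteq> F" by blast
  show "\<exists>a\<in>A. S \<subseteq> a \<and> \<sigma> \<subseteq> a - S" using L2[OF _ F(2)] a F(1) by blast
next
  assume "\<exists>a\<in>A. S \<subseteq> a \<and> \<sigma> \<subseteq> a - S"
  then obtain F where F: "F \<in> A" "S \<subseteq> F" "\<sigma> \<subseteq> F - S" by blast
  show "\<sigma> \<inter> S = {} \<and> (\<exists>a\<in>A. \<sigma> \<union> S \<subseteq> a)" using L1[OF F(2,3)] F(1) by blast
qed

lemma shelling_link:
  assumes sh: "k_shelling k D Fs" and fin: "finite D" and finF: "\<forall>F\<in>D. finite F"
  shows "k_shelling k (lk D S) (map (\<lambda>F. F - S) (filter (\<lambda>F. S \<subseteq> F) Fs))"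
proof -
  define L where "L = filter (\<lambda>F. S \<subseteq> F) Fs"
  define Fs' where "Fs' = map (\<lambda>F. F - S) L"
  note shu = sh[unfolded k_shelling_def]
  have dFs: "distinct Fs" using shu by (rule conjunct1)
  have sFs: "set Fs = facets D" using shu[THEN conjunct2] by (rule conjunct1)
  note sh3 = shu[THEN conjunct2, THEN conjunct2, rule_format]
  have injS: "inj_on (\<lambda>F. F - S) (set L)" unfolding L_def inj_on_def by auto
  have c1: "distinct Fs'" unfolding Fs'_def using dFs injS by (simp add: distinct_map L_def)
  have c2: "set Fs' = facets (lk D S)" unfolding Fs'_def L_def
    using facets_lk[OF fin, of S] sFs by auto
  have c3: "\<forall>j. 0 < j \<and> j < length Fs' \<longrightarrow> (let Fj = Fs' ! j; \<Gamma>j = gen {Fj} \<inter> gen (set (take j Fs')) in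
          (\<exists>A. A \<noteq> {} \<and> A \<subseteq> gen {Fj} \<and> (\<forall>\<sigma>\<in>A. card \<sigma> + k = card Fj) \<and> \<Gamma>j = gen A) \<and>
          (\<forall>\<sigma>\<in>facets \<Gamma>j. \<forall>\<tau>\<in>facets \<Gamma>j. \<sigma> \<noteq> \<tau> \<longrightarrow> Fj \<subseteq> \<sigma> \<union> \<tau>))"
  proof (intro allI impI)
    fix j assume j: "0 < j \<and> j < length Fs'"
    have jL: "j < length L" using j unfolding Fs'_def by simp
    from filter_take_idx[OF jL[unfolded L_def]] obtain j0 where j0: "j0 < length Fs"
      "L ! j = Fs ! j0" "S \<subseteq> Fs ! j0" "take j L = filter (\<lambda>F. S \<subseteq> F) (take j0 Fs)"
      unfolding L_def by blast
    define Fj where "Fj = Fs ! j0"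
    have ne: "take j L \<noteq> []" using j jL by (cases L) auto
    then have "0 < j0" using j0(4) by (cases j0) auto
    define G0 where "G0 = gen {Fj} \<inter> gen (set (take j0 Fs))"
    have P: "(\<exists>A. A \<noteq> {} \<and> A \<subseteq> gen {Fj} \<and> (\<forall>\<sigma>\<in>A. card \<sigma> + k = card Fj) \<and> G0 = gen A) \<and>
          (\<forall>\<sigma>\<in>facets G0. \<forall>\<tau>\<in>facets G0. \<sigma> \<noteq> \<tau> \<longrightarrow> Fj \<subseteq> \<sigma> \<union> \<tau>)"
      using sh3[OF conjI[OF \<open>0 < j0\<close> j0(1)]] unfolding Let_def Fj_def G0_def .
    from P[THEN conjunct1] obtain A where A: "A \<noteq> {}" "A \<subseteq> gen {Fj}"
      "\<forall>\<sigma>\<in>A. card \<sigma> + k = card Fj" "G0 = gen A" by blast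
    note P2 = P[THEN conjunct2]
    have SF: "S \<subseteq> Fj" using j0 Fj_def by simp
    have Fj': "Fs' ! j = Fj - S" unfolding Fs'_def Fj_def using jL j0 by simp
    have tk: "set (take j Fs') = (\<lambda>F. F - S) ` {F \<in> set (take j0 Fs). S \<subseteq> F}"
      unfolding Fs'_def take_map using j0(4) by simp
    define G1 where "G1 = gen {Fj - S} \<inter> gen (set (take j Fs'))"
    have G1: "G1 = lk G0 S"
    proof (rule set_eqI)
      fix \<sigma>
      have "\<sigma> \<in> G1 \<longleftrightarrow> \<sigma> \<subseteq> Fj - S \<and> (\<exists>F\<in>set (take j0 Fs). S \<subseteq> F \<and> \<sigma> \<subseteq> F - S)"
        unfolding G1_def tk gen_def by (simp add: Bex_def)
      also have "\<dots> \<longleftrightarrow> \<sigma> \<inter> S = {} \<and> \<sigma> \<union> S \<subseteq> Fj \<and> (\<exists>F\<in>set (take j0 Fs). \<sigma> \<union> S \<subseteq> F)"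
        by (rule L3[OF SF])
      also have "\<dots> \<longleftrightarrow> \<sigma> \<in> lk G0 S"
        unfolding lk_def G0_def gen_def by simp
      finally show "\<sigma> \<in> G1 \<longleftrightarrow> \<sigma> \<in> lk G0 S" .
    qed
    have "Fj \<in> set Fs" unfolding Fj_def using j0(1) by simp
    then have "Fj \<in> D" using sFs unfolding facets_def by auto
    then have finFj: "finite Fj" using finF by blast
    define A' where "A' = (\<lambda>a. a - S) ` {a\<in>A. S \<subseteq> a}"
    obtain F0 where "F0 \<in> set (take j L)" using ne by (cases "take j L") auto
    then have "F0 \<in> set (take j0 Fs)" "S \<subseteq> F0" using j0(4) by auto
    then have "S \<in> G0" unfolding G0_def gen_def using SF by blast
    then obtain a where "a \<in> A" "S \<subseteq> a" using A(4) unfolding gen_def by blast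
    then have A'ne: "A' \<noteq> {}" unfolding A'_def by blast
    have A'sub: "A' \<subseteq> gen {Fj - S}" using A(2) unfolding A'_def gen_def by blast
    have A'card: "\<forall>\<sigma>\<in>A'. card \<sigma> + k = card (Fj - S)"
    proof
      fix \<sigma> assume "\<sigma> \<in> A'"
      then obtain a where a: "a \<in> A" "S \<subseteq> a" "\<sigma> = a - S" unfolding A'_def by blast
      have "a \<subseteq> Fj" using a A(2) unfolding gen_def by blast
      then have fa: "finite a" using finFj finite_subset by blast
      have fS: "finite S" using fa a(2) finite_subset by blast
      have "card S \<le> card a" using card_mono[OF fa a(2)] .
      moreover have "card (a - S) = card a - card S" using card_Diff_subset[OF fS a(2)] .
      moreover have "card (Fj - S) = card Fj - card S" using card_Diff_subset[OF fS SF] .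
      moreover have "card a + k = card Fj" using A(3) a(1) by blast
      ultimately show "card \<sigma> + k = card (Fj - S)" using a(3) by simp
    qed
    have G1A: "G1 = gen A'"
    proof (rule set_eqI)
      fix \<sigma>
      have "\<sigma> \<in> G1 \<longleftrightarrow> \<sigma> \<inter> S = {} \<and> (\<exists>a\<in>A. \<sigma> \<union> S \<subseteq> a)"
        unfolding G1 lk_def A(4) gen_def by simp
      also have "\<dots> \<longleftrightarrow> (\<exists>a\<in>A. S \<subseteq> a \<and> \<sigma> \<subseteq> a - S)" by (rule L4)
      also have "\<dots> \<longleftrightarrow> \<sigma> \<in> gen A'" unfolding A'_def gen_def by (simp add: Bex_def)
      finally show "\<sigma> \<in> G1 \<longleftrightarrow> \<sigma> \<in> gen A'" .
    qed
    have P2': "\<forall>\<sigma>\<in>facets G1. \<forall>\<tau>\<in>facets G1. \<sigma> \<noteq> \<tau> \<longrightarrow> Fj - S \<subseteq> \<sigma> \<union> \<tau>"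
    proof (intro ballI impI)
      fix \<sigma> \<tau> assume a: "\<sigma> \<in> facets G1" "\<tau> \<in> facets G1" "\<sigma> \<noteq> \<tau>"
      have "\<sigma> \<in> facets (lk G0 S)" using a(1) G1 by simp
      note s1 = lk_facet[OF this]
      have "\<tau> \<in> facets (lk G0 S)" using a(2) G1 by simp
      note s2 = lk_facet[OF this]
      have "\<sigma> \<union> S \<noteq> \<tau> \<union> S"
      proof
        assume "\<sigma> \<union> S = \<tau> \<union> S"
        then have "(\<sigma> \<union> S) - S = (\<tau> \<union> S) - S" by simp
        then show False using a(3) s1 s2 by (simp add: Diff_triv Un_Diff)
      qed
      then have "Fj \<subseteq> (\<sigma> \<union> S) \<union> (\<tau> \<union> S)"
        using P2[rule_format, OF s1[THEN conjunct1] s2[THEN conjunct1]] by simp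
      then show "Fj - S \<subseteq> \<sigma> \<union> \<tau>" by blast
    qed
    have "(\<exists>A. A \<noteq> {} \<and> A \<subseteq> gen {Fj - S} \<and> (\<forall>\<sigma>\<in>A. card \<sigma> + k = card (Fj - S)) \<and> G1 = gen A) \<and>
          (\<forall>\<sigma>\<in>facets G1. \<forall>\<tau>\<in>facets G1. \<sigma> \<noteq> \<tau> \<longrightarrow> Fj - S \<subseteq> \<sigma> \<union> \<tau>)"
      using A'ne A'sub A'card G1A P2' by blast
    then show "let Fj = Fs' ! j; \<Gamma>j = gen {Fj} \<inter> gen (set (take j Fs')) in
          (\<exists>A. A \<noteq> {} \<and> A \<subseteq> gen {Fj} \<and> (\<forall>\<sigma>\<in>A. card \<sigma> + k = card Fj) \<and> \<Gamma>j = gen A) \<and>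
          (\<forall>\<sigma>\<in>facets \<Gamma>j. \<forall>\<tau>\<in>facets \<Gamma>j. \<sigma> \<noteq> \<tau> \<longrightarrow> Fj \<subseteq> \<sigma> \<union> \<tau>)"
      unfolding Let_def Fj' G1_def .
  qed
  have "k_shelling k (lk D S) Fs'" unfolding k_shelling_def using c1 c2 c3 by (intro conjI)
  then show ?thesis unfolding Fs'_def L_def .
qed

lemma lk_ind:
  assumes "S \<subseteq> V" "independent_set E S"
  shows "lk (ind_complex V E) S =
    ind_complex (del_verts V (closed_nbhd V E S)) (del_edges E (closed_nbhd V E S))"
proof -
  let ?N = "closed_nbhd V E S"
  have SN: "S \<subseteq> ?N" unfolding closed_nbhd_def by blast
  have N: "x \<in> ?N \<longleftrightarrow> x \<in> S \<or> (\<exists>s\<in>S. x \<in> V \<and> {s, x} \<in> E)" for x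
    unfolding closed_nbhd_def adjacent_def by blast
  show ?thesis
  proof (intro set_eqI iffI)
    fix F assume "F \<in> lk (ind_complex V E) S"
    then have F: "F \<inter> S = {}" "F \<union> S \<subseteq> V" "\<forall>x\<in>F \<union> S. \<forall>y\<in>F \<union> S. {x, y} \<notin> E"
      unfolding lk_def ind_complex_def independent_set_def adjacent_def by auto
    have "F \<subseteq> V - ?N"
    proof
      fix x assume x: "x \<in> F"
      have "x \<notin> ?N" using F x N by blast
      then show "x \<in> V - ?N" using x F by blast
    qed
    then show "F \<in> ind_complex (del_verts V ?N) (del_edges E ?N)"
      unfolding ind_complex_def independent_set_def adjacent_def del_verts_def del_edges_def
      using F by blast
  next
    fix F assume "F \<in> ind_complex (del_verts V ?N) (del_edges E ?N)"
    then have F: "F \<subseteq> V - ?N" "\<forall>x\<in>F. \<forall>y\<in>F. {x, y} \<notin> E"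
      unfolding ind_complex_def independent_set_def adjacent_def del_verts_def del_edges_def
      by auto
    have S': "\<forall>x\<in>S. \<forall>y\<in>S. {x, y} \<notin> E" using assms(2)
      unfolding independent_set_def adjacent_def by blast
    have "\<forall>x\<in>F \<union> S. \<forall>y\<in>F \<union> S. {x, y} \<notin> E"
    proof (intro ballI)
      fix x y assume "x \<in> F \<union> S" "y \<in> F \<union> S"
      then show "{x, y} \<notin> E" using F S' N by (metis DiffD1 DiffD2 Un_iff insert_commute subsetD)
    qed
    moreover have "F \<inter> S = {}" using F SN by blast
    ultimately show "F \<in> lk (ind_complex V E) S"
      unfolding lk_def ind_complex_def independent_set_def adjacent_def using F assms(1) by blast
  qed
qed

theorem corollary4p5:
  fixes V :: "'a set" and E :: "'a set set" and S :: "'a set" and k :: nat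
  assumes "simple_graph V E"
    and "S \<subseteq> V"
    and "independent_set E S"
    and "k_shellable_graph k V E"
  shows "k_shellable_graph k (del_verts V (closed_nbhd V E S)) (del_edges E (closed_nbhd V E S))"
proof -
  have fV: "finite V" using assms(1) unfolding simple_graph_def by blast
  have sub: "ind_complex V E \<subseteq> Pow V" unfolding ind_complex_def by blast
  have fin: "finite (ind_complex V E)" using finite_subset[OF sub] fV by blast
  have finF: "\<forall>F\<in>ind_complex V E. finite F" using sub fV finite_subset by blast
  from assms(4) obtain Fs where k: "1 \<le> k" and sh: "k_shelling k (ind_complex V E) Fs"
    unfolding k_shellable_graph_def k_shellable_def by blast
  from shelling_link[OF sh fin finF, of S] k show ?thesis
    unfolding k_shellable_graph_def k_shellable_def lk_ind[OF assms(2,3)] by blast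
qed

end
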